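(* Consider the DS-PSRL algorithm run on a parametrized MDP with scalar parameter satisfying the Lipschitz condition: there is $C$ with $\|P(\cdot\mid x,a,\theta)-P(\cdot\mid x,a,\theta')\|_1\le C|\theta-\theta'|$ for all $x,a$ and $\theta,\theta'\in\Theta\subseteq\mathbb{R}$, and whose differential value functions satisfy $h(x,\theta)\in[0,H]$. Let $m$ be the number of episodes up to time $T$, $M_j$ the number of steps in the $j$-th episode, and $\widetilde\theta_j$ the parameter sampled for episode $j$. Then \[ \mathbb{E}\Big[\sum_{t=1}^T\Delta_t\Big]\le CH\sqrt{T\,\mathbb{E}\Big[\sum_{j=1}^m M_j|\theta_*-\widetilde\theta_j|^2\Big]}. \]
   Context: Setting: parametrized MDP with state space $\mathcal{X}$, action space $\mathcal{A}$, known loss, known transition kernels $P(\cdot\mid x,a,\theta)$, unknown true parameter $\theta_*$ drawn from a known prior. $h(\cdot,\theta)$ is the differential value function of the average-cost Bellman optimality equation for parameter $\theta$. DS-PSRL: set $L=1$; at each $t$, if $t=L$ sample $\widetilde\theta_t$ from the current posterior and set $L\leftarrow2L$, else keep $\widetilde\theta_t=\widetilde\theta_{t-1}$; play the optimal action $a_t$ for parameter $\widetilde\theta_t$ at state $x_t$; observe $x_{t+1}\sim P(\cdot\mid x_t,a_t,\theta_* )$; update the posterior. An episode is a maximal run of steps with the same sampled parameter. With $h_t=h(\cdot,\widetilde\theta_t)$, define $\Delta_t=\int_{\mathcal{X}}\big(P(x\mid x_t,a_t,\theta_* )-P(x\mid x_t,a_t,\widetilde\theta_t)\big)h_t(x)\,dx$.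 *)

theory Defs
  imports "HOL-Probability.Probability"
begin

text \<open>Transition densities are written P y x a th = P(y | x, a, th), densities w.r.t.
  a reference measure mu on the state space.\<close>

definition Delta ::
  "'x measure \<Rightarrow> ('x \<Rightarrow> 'x \<Rightarrow> 'a \<Rightarrow> real \<Rightarrow> real) \<Rightarrow> ('x \<Rightarrow> real \<Rightarrow> real)
    \<Rightarrow> 'x \<Rightarrow> 'a \<Rightarrow> real \<Rightarrow> real \<Rightarrow> real" where
  "Delta mu P h x a thstar thtil =
     (\<integral>y. (P y x a thstar - P y x a thtil) * h y thtil \<partial>mu)"

definition sample_time :: "nat \<Rightarrow> bool" where
  "sample_time t \<longleftrightarrow> (\<exists>k. t = 2 ^ k)"

text \<open>Episode j (j \<ge> 1) consists of the times t with 2^(j-1) \<le> t < 2^j.\<close>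
definition num_episodes :: "nat \<Rightarrow> nat" where
  "num_episodes T = card {j::nat. 1 \<le> j \<and> 2 ^ (j - 1) \<le> T}"

definition episode_length :: "nat \<Rightarrow> nat \<Rightarrow> nat" where
  "episode_length T j = card {t \<in> {1..T}. 2 ^ (j - 1) \<le> t \<and> t < 2 ^ j}"

end

theory Submission
  imports Defs
begin


lemma sqrt_int_le:
  assumes "prob_space M" "integrable M f" "\<And>w. w \<in> space M \<Longrightarrow> 0 \<le> f w"
  shows "integrable M (\<lambda>w. sqrt (f w)) \<and> (\<integral>w. sqrt (f w) \<partial>M) \<le> sqrt (\<integral>w. f w \<partial>M)"
proof -
  interpret prob_space M by fact
  have fm: "f \<in> borel_measurable M" using assms(2) by auto
  have ib: "integrable M (\<lambda>w. (1 + f w) / 2)" using assms(2) by auto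
  have int: "integrable M (\<lambda>w. sqrt (f w))"
  proof (rule Bochner_Integration.integrable_bound[OF ib])
    show "(\<lambda>w. sqrt (f w)) \<in> borel_measurable M" using fm by measurable
    show "AE x in M. norm (sqrt (f x)) \<le> norm ((1 + f x) / 2)"
    proof (rule AE_I2)
      fix x assume x: "x \<in> space M"
      have "0 \<le> (sqrt (f x) - 1)^2" by simp
      hence "2 * sqrt (f x) \<le> 1 + f x" using assms(3)[OF x]
        by (simp add: power2_eq_square algebra_simps)
      thus "norm (sqrt (f x)) \<le> norm ((1 + f x) / 2)" using assms(3)[OF x] by simp
    qed
  qed
  define E where "E = (\<integral>w. f w \<partial>M)"
  have E0: "0 \<le> E" unfolding E_def using assms(3) by (simp add: integral_nonneg)
  have key: "(\<integral>w. sqrt (f w) \<partial>M) \<le> (E + c^2) / (2*c)" if c: "c > 0" for c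
  proof -
    have "(\<integral>w. sqrt (f w) \<partial>M) \<le> (\<integral>w. (f w + c^2) / (2*c) \<partial>M)"
    proof (rule integral_mono[OF int])
      show "integrable M (\<lambda>w. (f w + c^2) / (2*c))" using assms(2) by auto
      fix x assume x: "x \<in> space M"
      have "0 \<le> (sqrt (f x) - c)^2" by simp
      hence "2 * c * sqrt (f x) \<le> f x + c^2" using assms(3)[OF x]
        by (simp add: power2_eq_square algebra_simps)
      thus "sqrt (f x) \<le> (f x + c^2) / (2*c)" using c by (simp add: field_simps)
    qed
    also have "\<dots> = (E + c^2) / (2*c)" unfolding E_def using assms(2)
      by (simp add: prob_space)
    finally show ?thesis .
  qed
  have "(\<integral>w. sqrt (f w) \<partial>M) \<le> sqrt E"
  proof (cases "E = 0")
    case True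
    have "(\<integral>w. sqrt (f w) \<partial>M) \<le> 0"
    proof (rule field_le_epsilon)
      fix e :: real assume e: "0 < e"
      have "(\<integral>w. sqrt (f w) \<partial>M) \<le> (E + e^2) / (2*e)" using key e by simp
      also have "\<dots> = e / 2" using True e by (simp add: power2_eq_square)
      also have "\<dots> \<le> 0 + e" using e by simp
      finally show "(\<integral>w. sqrt (f w) \<partial>M) \<le> 0 + e" .
    qed
    thus ?thesis using True by simp
  next
    case False
    hence p: "sqrt E > 0" using E0 by simp
    have "(\<integral>w. sqrt (f w) \<partial>M) \<le> (E + (sqrt E)^2) / (2 * sqrt E)" using key[OF p] .
    also have "\<dots> = sqrt E" using E0 p by (simp add: field_simps power2_eq_square)
    finally show ?thesis .
  qed
  thus ?thesis using int E_def by simp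
qed



lemma ep_const:
  assumes sch: "\<And>t. 1 \<le> t \<Longrightarrow> \<not> sample_time (Suc t) \<Longrightarrow> th (Suc t) = th t"
    and j: "1 \<le> j" and t1: "2 ^ (j - 1) \<le> t" and t2: "t < (2::nat) ^ j"
  shows "th t = th (2 ^ (j - 1))"
  using t1 t2
proof (induction t rule: dec_induct)
  case base then show ?case by simp
next
  case (step n)
  have n1: "1 \<le> n" using step.hyps(1) by (metis one_le_power le_trans one_le_numeral)
  have "\<not> sample_time (Suc n)"
  proof
    assume "sample_time (Suc n)"
    then obtain k where k: "Suc n = 2 ^ k" unfolding sample_time_def by auto
    have "(2::nat) ^ (j - 1) < 2 ^ k" using step.hyps(1) k by linarith
    hence "j - 1 < k" by (simp only: power_strict_increasing_iff[of 2]) 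
    moreover have "(2::nat) ^ k < 2 ^ j" using step.prems k by simp
    hence "k < j" by simp
    ultimately show False using j by simp
  qed
  then have "th (Suc n) = th n" using sch n1 by simp
  also have "\<dots> = th (2 ^ (j - 1))" using step by simp
  finally show ?case .
qed

lemma ep_set:
  "{j::nat. 1 \<le> j \<and> 2 ^ (j - 1) \<le> T} = {1..num_episodes T}"
proof -
  let ?A = "{j::nat. 1 \<le> j \<and> 2 ^ (j - 1) \<le> T}"
  have sub: "?A \<subseteq> {1..T}"
  proof
    fix j assume "j \<in> ?A"
    hence "1 \<le> j" "2 ^ (j - 1) \<le> T" by auto
    moreover have "j - 1 < 2 ^ (j - 1)" by (rule less_exp)
    ultimately have "j - 1 < T" by linarith
    thus "j \<in> {1..T}" using \<open>1 \<le> j\<close> by simp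
  qed
  hence fin: "finite ?A" by (rule finite_subset) simp
  show ?thesis
  proof (cases "?A = {}")
    case True
    hence "num_episodes T = 0" unfolding num_episodes_def by (simp only: card.empty)
    thus ?thesis using True by simp
  next
    case False
    let ?m = "Max ?A"
    have mA: "?m \<in> ?A" using Max_in[OF fin False] .
    have eq: "?A = {1..?m}"
    proof
      show "?A \<subseteq> {1..?m}" using Max_ge[OF fin] by auto
      show "{1..?m} \<subseteq> ?A"
      proof
        fix i assume i: "i \<in> {1..?m}"
        hence "(2::nat) ^ (i - 1) \<le> 2 ^ (?m - 1)" by (intro power_increasing) auto
        also have "\<dots> \<le> T" using mA by blast
        finally show "i \<in> ?A" using i by auto
      qed
    qed
    have "num_episodes T = card {1..?m}" unfolding num_episodes_def by (subst eq) (rule refl)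
    hence "num_episodes T = ?m" by simp
    thus ?thesis using eq by simp
  qed
qed

lemma regroup:
  fixes F :: "'b \<Rightarrow> real"
  assumes sch: "\<And>t. 1 \<le> t \<Longrightarrow> \<not> sample_time (Suc t) \<Longrightarrow> th (Suc t) = th t"
  shows "(\<Sum>t=1..T. F (th t)) =
         (\<Sum>j=1..num_episodes T. real (episode_length T j) * F (th (2 ^ (j - 1))))"
proof -
  define E where "E j = {t \<in> {1..T}. 2 ^ (j - 1) \<le> t \<and> t < (2::nat) ^ j}" for j
  have U: "{1..T} = (\<Union>j\<in>{1..num_episodes T}. E j)"
  proof
    show "{1..T} \<subseteq> (\<Union>j\<in>{1..num_episodes T}. E j)"
    proof
      fix t assume t: "t \<in> {1..T}"
      then obtain n where n: "2 ^ n \<le> t" "t < 2 ^ (n + 1)"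
        using ex_power_ivl1[of 2 t] by auto
      have "Suc n \<in> {j::nat. 1 \<le> j \<and> 2 ^ (j - 1) \<le> T}" using n t by auto
      hence "Suc n \<in> {1..num_episodes T}" using ep_set by blast
      moreover have "t \<in> E (Suc n)" using n t unfolding E_def by auto
      ultimately show "t \<in> (\<Union>j\<in>{1..num_episodes T}. E j)" by blast
    qed
    show "(\<Union>j\<in>{1..num_episodes T}. E j) \<subseteq> {1..T}" unfolding E_def by auto
  qed
  have disj: "E i \<inter> E j = {}" if "i \<in> {1..num_episodes T}" "j \<in> {1..num_episodes T}" "i \<noteq> j" for i j
  proof (rule ccontr)
    assume "E i \<inter> E j \<noteq> {}"
    then obtain t where "2 ^ (i - 1) \<le> t" "t < (2::nat) ^ i" "2 ^ (j - 1) \<le> t" "t < (2::nat) ^ j"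
      unfolding E_def by auto
    hence "(2::nat) ^ (i - 1) < 2 ^ j" "(2::nat) ^ (j - 1) < 2 ^ i" by linarith+
    hence "i - 1 < j" "j - 1 < i" by simp_all
    thus False using that by simp
  qed
  have "(\<Sum>t=1..T. F (th t)) = (\<Sum>j\<in>{1..num_episodes T}. \<Sum>t\<in>E j. F (th t))"
    unfolding U by (rule sum.UNION_disjoint) (use disj in \<open>auto simp: E_def\<close>)
  also have "\<dots> = (\<Sum>j=1..num_episodes T. real (episode_length T j) * F (th (2 ^ (j - 1))))"
  proof (rule sum.cong[OF refl])
    fix j assume j: "j \<in> {1..num_episodes T}"
    have "(\<Sum>t\<in>E j. F (th t)) = (\<Sum>t\<in>E j. F (th (2 ^ (j - 1))))"
    proof (rule sum.cong[OF refl])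
      fix t assume "t \<in> E j"
      hence "2 ^ (j - 1) \<le> t" "t < (2::nat) ^ j" unfolding E_def by auto
      moreover have "1 \<le> j" using j by simp
      ultimately have "th t = th (2 ^ (j - 1))" by (intro ep_const[where th=th, OF sch])
      thus "F (th t) = F (th (2 ^ (j - 1)))" by simp
    qed
    also have "\<dots> = real (episode_length T j) * F (th (2 ^ (j - 1)))"
      unfolding episode_length_def E_def by simp
    finally show "(\<Sum>t\<in>E j. F (th t)) = real (episode_length T j) * F (th (2 ^ (j - 1)))" .
  qed
  finally show ?thesis .
qed



theorem lemma3:
  fixes M :: "'w measure" and SX :: "'x measure" and mu :: "'x measure"
    and Act :: "'a set" and Theta :: "real set"
    and P :: "'x \<Rightarrow> 'x \<Rightarrow> 'a \<Rightarrow> real \<Rightarrow> real"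
    and loss :: "'x \<Rightarrow> 'a \<Rightarrow> real"
    and h :: "'x \<Rightarrow> real \<Rightarrow> real" and J :: "real \<Rightarrow> real"
    and C H :: real and T :: nat
    and thstar :: "'w \<Rightarrow> real" and thtil :: "nat \<Rightarrow> 'w \<Rightarrow> real"
    and xs :: "nat \<Rightarrow> 'w \<Rightarrow> 'x" and acts :: "nat \<Rightarrow> 'w \<Rightarrow> 'a"
  assumes prob: "prob_space M"
    and mu_sets: "sets mu = sets SX"
    and dens_meas: "\<And>x a th. x \<in> space SX \<Longrightarrow> a \<in> Act \<Longrightarrow> th \<in> Theta \<Longrightarrow>
                      (\<lambda>y. P y x a th) \<in> borel_measurable mu"
    and dens_nonneg: "\<And>y x a th. y \<in> space SX \<Longrightarrow> x \<in> space SX \<Longrightarrow> a \<in> Act \<Longrightarrow>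
                      th \<in> Theta \<Longrightarrow> 0 \<le> P y x a th"
    and dens_int: "\<And>x a th. x \<in> space SX \<Longrightarrow> a \<in> Act \<Longrightarrow> th \<in> Theta \<Longrightarrow>
                      integrable mu (\<lambda>y. P y x a th)"
    and dens_one: "\<And>x a th. x \<in> space SX \<Longrightarrow> a \<in> Act \<Longrightarrow> th \<in> Theta \<Longrightarrow>
                      (\<integral>y. P y x a th \<partial>mu) = 1"
    and lipschitz: "\<And>x a th th'. x \<in> space SX \<Longrightarrow> a \<in> Act \<Longrightarrow> th \<in> Theta \<Longrightarrow>
                      th' \<in> Theta \<Longrightarrow>
                      (\<integral>y. \<bar>P y x a th - P y x a th'\<bar> \<partial>mu) \<le> C * \<bar>th - th'\<bar>"
    and h_meas: "\<And>th. th \<in> Theta \<Longrightarrow> (\<lambda>y. h y th) \<in> borel_measurable SX"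
    and h_range: "\<And>x th. x \<in> space SX \<Longrightarrow> th \<in> Theta \<Longrightarrow> 0 \<le> h x th \<and> h x th \<le> H"
    and bellman: "\<And>x th. x \<in> space SX \<Longrightarrow> th \<in> Theta \<Longrightarrow>
                      (\<exists>a\<in>Act. J th + h x th = loss x a + (\<integral>y. P y x a th * h y th \<partial>mu))
                    \<and> (\<forall>a\<in>Act. J th + h x th \<le> loss x a + (\<integral>y. P y x a th * h y th \<partial>mu))"
    and thstar_Theta: "\<And>w. w \<in> space M \<Longrightarrow> thstar w \<in> Theta"
    and thtil_Theta: "\<And>t w. w \<in> space M \<Longrightarrow> thtil t w \<in> Theta"
    and xs_space: "\<And>t w. w \<in> space M \<Longrightarrow> xs t w \<in> space SX"
    and acts_Act: "\<And>t w. w \<in> space M \<Longrightarrow> acts t w \<in> Act"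
    and greedy: "\<And>t w. w \<in> space M \<Longrightarrow> 1 \<le> t \<Longrightarrow>
                   J (thtil t w) + h (xs t w) (thtil t w)
                   = loss (xs t w) (acts t w)
                     + (\<integral>y. P y (xs t w) (acts t w) (thtil t w) * h y (thtil t w) \<partial>mu)"
    and schedule: "\<And>t w. w \<in> space M \<Longrightarrow> 1 \<le> t \<Longrightarrow> \<not> sample_time (Suc t) \<Longrightarrow>
                   thtil (Suc t) w = thtil t w"
    and Delta_meas: "\<And>t. (\<lambda>w. Delta mu P h (xs t w) (acts t w) (thstar w) (thtil t w))
                          \<in> borel_measurable M"
    and rhs_int: "integrable M (\<lambda>w. \<Sum>j=1..num_episodes T.
                     real (episode_length T j) * \<bar>thstar w - thtil (2 ^ (j - 1)) w\<bar>\<^sup>2)"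
  shows "(\<integral>w. (\<Sum>t=1..T. Delta mu P h (xs t w) (acts t w) (thstar w) (thtil t w)) \<partial>M)
         \<le> C * H * sqrt (real T * (\<integral>w. (\<Sum>j=1..num_episodes T.
                     real (episode_length T j) * \<bar>thstar w - thtil (2 ^ (j - 1)) w\<bar>\<^sup>2) \<partial>M))"
  proof -
  interpret prob_space M by (rule prob)
  have spmu: "space mu = space SX" using mu_sets by (rule sets_eq_imp_space_eq)
  obtain w0 where w0: "w0 \<in> space M" using not_empty by blast
  have H0: "0 \<le> H" using h_range[OF xs_space[OF w0] thstar_Theta[OF w0], of 0] by linarith
  have Dbound: "Delta mu P h x a th th' \<le> C * H * \<bar>th - th'\<bar>"
    if x: "x \<in> space SX" and a: "a \<in> Act" and th: "th \<in> Theta" and th': "th' \<in> Theta"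
    for x a th th'
  proof -
    have idiff: "integrable mu (\<lambda>y. H * \<bar>P y x a th - P y x a th'\<bar>)"
      using dens_int[OF x a th] dens_int[OF x a th'] by auto
    have "Delta mu P h x a th th' \<le> (\<integral>y. H * \<bar>P y x a th - P y x a th'\<bar> \<partial>mu)"
      unfolding Delta_def
    proof (rule integral_mono'[OF idiff])
      fix y assume "y \<in> space mu"
      hence y: "y \<in> space SX" using spmu by simp
      have hb: "0 \<le> h y th'" "h y th' \<le> H" using h_range[OF y th'] by auto
      have "(P y x a th - P y x a th') * h y th' \<le> \<bar>P y x a th - P y x a th'\<bar> * h y th'"
        using hb by (intro mult_right_mono) auto
      also have "\<dots> \<le> \<bar>P y x a th - P y x a th'\<bar> * H"
        using hb by (intro mult_left_mono) auto
      finally show "(P y x a th - P y x a th') * h y th' \<le> H * \<bar>P y x a th - P y x a th'\<bar>"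
        by (simp add: mult.commute)
      show "0 \<le> H * \<bar>P y x a th - P y x a th'\<bar>" using H0 by simp
    qed
    also have "\<dots> = H * (\<integral>y. \<bar>P y x a th - P y x a th'\<bar> \<partial>mu)" by simp
    also have "\<dots> \<le> H * (C * \<bar>th - th'\<bar>)"
      using lipschitz[OF x a th th'] H0 by (intro mult_left_mono) auto
    finally show ?thesis by (simp add: ac_simps)
  qed
  define d where "d t w = thstar w - thtil t w" for t w
  define S where "S w = (\<Sum>j=1..num_episodes T.
                     real (episode_length T j) * \<bar>thstar w - thtil (2 ^ (j - 1)) w\<bar>\<^sup>2)" for w
  have S_eq: "S w = (\<Sum>t=1..T. (d t w)\<^sup>2)" if w: "w \<in> space M" for w
  proof -
    have "(\<Sum>t=1..T. (\<lambda>th. \<bar>thstar w - th\<bar>\<^sup>2) ((\<lambda>t. thtil t w) t)) =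
      (\<Sum>j=1..num_episodes T. real (episode_length T j) *
         (\<lambda>th. \<bar>thstar w - th\<bar>\<^sup>2) ((\<lambda>t. thtil t w) (2 ^ (j - 1))))"
      by (rule regroup) (use schedule w in auto)
    thus ?thesis unfolding S_def d_def by simp
  qed
  have S_nn: "0 \<le> S w" for w unfolding S_def by (intro sum_nonneg) auto
  have Cneg: "d t w = 0" if "C < 0" "w \<in> space M" for t w
  proof -
    have "0 \<le> (\<integral>y. \<bar>P y (xs t w) (acts t w) (thstar w) - P y (xs t w) (acts t w) (thtil t w)\<bar> \<partial>mu)"
      by (rule Bochner_Integration.integral_nonneg) auto
    also have "\<dots> \<le> C * \<bar>thstar w - thtil t w\<bar>"
      using lipschitz[OF xs_space acts_Act thstar_Theta thtil_Theta] that by blast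
    finally have "0 \<le> C * \<bar>thstar w - thtil t w\<bar>" .
    hence "\<bar>thstar w - thtil t w\<bar> \<le> 0" using that(1)
      by (metis abs_ge_zero mult_neg_pos not_le order_le_less)
    thus ?thesis unfolding d_def by simp
  qed
  have CHneg: "S w = 0" if "C * H < 0" "w \<in> space M" for w
  proof -
    have "C < 0" using that(1) H0 by (metis mult_nonneg_nonneg not_le)
    thus ?thesis using S_eq[OF that(2)] Cneg[OF _ that(2)] by simp
  qed
  have pw: "(\<Sum>t=1..T. Delta mu P h (xs t w) (acts t w) (thstar w) (thtil t w))
            \<le> C * H * sqrt (real T * S w)" if w: "w \<in> space M" for w
  proof -
    have "(\<Sum>t=1..T. Delta mu P h (xs t w) (acts t w) (thstar w) (thtil t w))
          \<le> (\<Sum>t=1..T. C * H * \<bar>d t w\<bar>)"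
      unfolding d_def
      by (intro sum_mono Dbound xs_space acts_Act thstar_Theta thtil_Theta w)
    also have "\<dots> = C * H * (\<Sum>t=1..T. \<bar>d t w\<bar>)" by (simp add: sum_distrib_left)
    also have "\<dots> \<le> C * H * sqrt (real T * S w)"
    proof (cases "C * H < 0")
      case True
      have "C < 0" using True H0 by (metis mult_nonneg_nonneg not_le)
      thus ?thesis using CHneg[OF True w] Cneg[OF _ w] by simp
    next
      case False
      have "(\<Sum>t=1..T. 1 * \<bar>d t w\<bar>)\<^sup>2 \<le> (\<Sum>t=1..T. 1\<^sup>2) * (\<Sum>t=1..T. \<bar>d t w\<bar>\<^sup>2)"
        by (rule Cauchy_Schwarz_ineq_sum)
      hence "(\<Sum>t=1..T. \<bar>d t w\<bar>)\<^sup>2 \<le> real T * S w" using S_eq[OF w] by simp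
      hence "(\<Sum>t=1..T. \<bar>d t w\<bar>) \<le> sqrt (real T * S w)" by (rule real_le_rsqrt)
      thus ?thesis using False by (intro mult_left_mono) auto
    qed
    finally show ?thesis .
  qed
  have TS: "integrable M (\<lambda>w. real T * S w)" using rhs_int unfolding S_def by auto
  from sqrt_int_le[OF prob TS] S_nn
  have J: "integrable M (\<lambda>w. sqrt (real T * S w))"
       "(\<integral>w. sqrt (real T * S w) \<partial>M) \<le> sqrt (\<integral>w. real T * S w \<partial>M)" by auto
  have "(\<integral>w. (\<Sum>t=1..T. Delta mu P h (xs t w) (acts t w) (thstar w) (thtil t w)) \<partial>M)
        \<le> (\<integral>w. C * H * sqrt (real T * S w) \<partial>M)"
  proof (rule integral_mono')
    show "integrable M (\<lambda>w. C * H * sqrt (real T * S w))" using J(1) by auto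
    fix w assume w: "w \<in> space M"
    show "(\<Sum>t=1..T. Delta mu P h (xs t w) (acts t w) (thstar w) (thtil t w))
          \<le> C * H * sqrt (real T * S w)" by (rule pw[OF w])
    show "0 \<le> C * H * sqrt (real T * S w)"
    proof (cases "C * H < 0")
      case True thus ?thesis using CHneg[OF True w] by simp
    next
      case False thus ?thesis using S_nn[of w] by simp
    qed
  qed
  also have "\<dots> \<le> C * H * sqrt (real T * (\<integral>w. S w \<partial>M))"
  proof (cases "C * H < 0")
    case True
    have "(\<integral>w. C * H * sqrt (real T * S w) \<partial>M) = (\<integral>w. 0 \<partial>M)"
      by (rule Bochner_Integration.integral_cong) (use CHneg[OF True] in auto)
    moreover have "(\<integral>w. S w \<partial>M) = (\<integral>w. 0 \<partial>M)"
      by (rule Bochner_Integration.integral_cong) (use CHneg[OF True] in auto)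
    ultimately show ?thesis by (simp only: integral_zero mult_zero_right real_sqrt_zero order_refl)
  next
    case False
    have "(\<integral>w. C * H * sqrt (real T * S w) \<partial>M) = C * H * (\<integral>w. sqrt (real T * S w) \<partial>M)"
      by simp
    also have "\<dots> \<le> C * H * sqrt (\<integral>w. real T * S w \<partial>M)"
      using J(2) False by (intro mult_left_mono) auto
    also have "(\<integral>w. real T * S w \<partial>M) = real T * (\<integral>w. S w \<partial>M)" by simp
    finally show ?thesis .
  qed
  finally show ?thesis unfolding S_def .
qed

end
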